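(* Let $n \geq 3$, let $\overline{g}$ be the standard metric on the unit sphere $S^n\subset\mathbb{R}^{n+1}$, $f = x_{n+1}|_{S^n}$, $S_+^n = \{f\ge 0\}$. For $\delta > 0$ let $\tilde g_\delta$ be a smooth Riemannian metric on $S_+^n$ with $\tilde g_\delta = \overline{g}$ on $\{f \leq \delta\}$ and $\tilde g_\delta = (1 - e^{-\frac{1}{f-\delta}})^{\frac{4}{n-2}}\,\overline{g}$ on $\{\delta < f < 3\delta\}$. If $\delta > 0$ is sufficiently small, then the scalar curvature of $\tilde g_\delta$ is strictly greater than $n(n-1)$ in the region $\{\delta < f < 3\delta\}$. *)

theory Defs
  imports "HOL-Analysis.Analysis"
begin

text \<open>Local Riemannian geometry in a coordinate chart U of R^n (n = CARD('n)).
  A metric is a matrix-valued function G; G x $ i $ j = g_ij(x).\<close>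

definition pd :: "'n::finite \<Rightarrow> (real^'n \<Rightarrow> 'b::real_normed_vector) \<Rightarrow> real^'n \<Rightarrow> 'b" where
  "pd i h x = vector_derivative (\<lambda>t. h (x + t *\<^sub>R axis i 1)) (at 0)"

fun iter_pd :: "'n::finite list \<Rightarrow> (real^'n \<Rightarrow> 'b::real_normed_vector) \<Rightarrow> real^'n \<Rightarrow> 'b" where
  "iter_pd [] h = h"
| "iter_pd (i # is) h = pd i (iter_pd is h)"

definition smooth_on_chart :: "(real^'n::finite) set \<Rightarrow> (real^'n \<Rightarrow> real) \<Rightarrow> bool" where
  "smooth_on_chart U h \<longleftrightarrow> (\<forall>is. iter_pd is h differentiable_on U)"

definition riemannian_metric_on :: "(real^'n::finite) set \<Rightarrow> (real^'n \<Rightarrow> real^'n^'n) \<Rightarrow> bool" where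
  "riemannian_metric_on U G \<longleftrightarrow>
     (\<forall>i j. smooth_on_chart U (\<lambda>x. G x $ i $ j)) \<and>
     (\<forall>x\<in>U. \<forall>i j. G x $ i $ j = G x $ j $ i) \<and>
     (\<forall>x\<in>U. \<forall>v. v \<noteq> 0 \<longrightarrow> v \<bullet> (G x *v v) > 0)"

definition christoffel :: "(real^'n::finite \<Rightarrow> real^'n^'n) \<Rightarrow> 'n \<Rightarrow> 'n \<Rightarrow> 'n \<Rightarrow> real^'n \<Rightarrow> real" where
  "christoffel G k i j x = (1/2) * (\<Sum>l\<in>UNIV. matrix_inv (G x) $ k $ l *
      (pd i (\<lambda>y. G y $ j $ l) x + pd j (\<lambda>y. G y $ i $ l) x - pd l (\<lambda>y. G y $ i $ j) x))"

definition ricci :: "(real^'n::finite \<Rightarrow> real^'n^'n) \<Rightarrow> 'n \<Rightarrow> 'n \<Rightarrow> real^'n \<Rightarrow> real" where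
  "ricci G i j x = (\<Sum>k\<in>UNIV. pd k (christoffel G k i j) x - pd j (christoffel G k i k) x
      + (\<Sum>l\<in>UNIV. christoffel G k k l x * christoffel G l i j x
                   - christoffel G k j l x * christoffel G l i k x))"

definition scalar_curvature :: "(real^'n::finite \<Rightarrow> real^'n^'n) \<Rightarrow> real^'n \<Rightarrow> real" where
  "scalar_curvature G x = (\<Sum>i\<in>UNIV. \<Sum>j\<in>UNIV. matrix_inv (G x) $ i $ j * ricci G i j x)"

text \<open>Graph chart of the open upper hemisphere of S^n in R^(n+1) = R^n x R:
  y in the open unit ball maps to (y, sqrt(1-|y|^2)).\<close>
definition sphere_chart :: "real^'n::finite \<Rightarrow> (real^'n) \<times> real" where
  "sphere_chart y = (y, sqrt (1 - (norm y)^2))"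

definition height :: "real^'n::finite \<Rightarrow> real" where
  "height y = snd (sphere_chart y)"

definition round_metric :: "real^'n::finite \<Rightarrow> real^'n^'n" where
  "round_metric y = (\<chi> i j. pd i sphere_chart y \<bullet> pd j sphere_chart y)"

end

theory Submission
  imports Defs "HOL-Analysis.Analysis"
begin


definition kd :: "'a \<Rightarrow> 'a \<Rightarrow> real" where "kd i j = (if i = j then 1 else 0)"

lemma has_derivative_vec_nth'[derivative_intros]:
  "((\<lambda>x::real^'n. x $ i) has_derivative (\<lambda>h. h $ i)) F"
  by (rule bounded_linear_imp_has_derivative[OF bounded_linear_vec_nth])

lemma pd_has_derivative:
  assumes "(h has_derivative h') (at x)"
  shows "pd i h x = h' (axis i 1)"
proof -
  have l: "((\<lambda>t::real. x + t *\<^sub>R axis i 1) has_derivative (\<lambda>t. t *\<^sub>R axis i 1)) (at 0)"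
    by (auto intro!: derivative_eq_intros)
  have h0: "(h has_derivative h') (at (x + 0 *\<^sub>R axis i 1))" using assms by simp
  have "((\<lambda>t. h (x + t *\<^sub>R axis i 1)) has_derivative (\<lambda>t. h' (t *\<^sub>R axis i 1))) (at 0)"
    using diff_chain_at[OF l h0] by (simp add: o_def)
  moreover have "(\<lambda>t. h' (t *\<^sub>R axis i 1)) = (\<lambda>t. t *\<^sub>R h' (axis i 1))"
    using has_derivative_linear[OF assms] by (simp add: linear_scale)
  ultimately have "((\<lambda>t. h (x + t *\<^sub>R axis i 1)) has_vector_derivative h' (axis i 1)) (at 0)"
    by (simp add: has_vector_derivative_def)
  then show ?thesis unfolding pd_def by (rule vector_derivative_at)
qed

lemma pd_local:
  assumes "open S" "x \<in> S" "\<And>z. z \<in> S \<Longrightarrow> f z = g z"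
  shows "pd i f x = pd i g x"
proof -
  let ?T = "{t::real. x + t *\<^sub>R axis i 1 \<in> S}"
  have eq: "?T = (\<lambda>t. x + t *\<^sub>R axis i 1) -` S" by auto
  have oT: "open ?T" unfolding eq
    by (rule open_vimage[OF assms(1)]) (auto intro!: continuous_intros)
  have T0: "0 \<in> ?T" using assms(2) by simp
  have "\<And>f'. ((\<lambda>t. f (x + t *\<^sub>R axis i 1)) has_vector_derivative f') (at 0) \<longleftrightarrow>
             ((\<lambda>t. g (x + t *\<^sub>R axis i 1)) has_vector_derivative f') (at 0)"
  proof
    fix f' assume "((\<lambda>t. f (x + t *\<^sub>R axis i 1)) has_vector_derivative f') (at 0)"
    then show "((\<lambda>t. g (x + t *\<^sub>R axis i 1)) has_vector_derivative f') (at 0)"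
      by (rule has_vector_derivative_transform_within_open[OF _ oT T0]) (simp add: assms(3))
  next
    fix f' assume "((\<lambda>t. g (x + t *\<^sub>R axis i 1)) has_vector_derivative f') (at 0)"
    then show "((\<lambda>t. f (x + t *\<^sub>R axis i 1)) has_vector_derivative f') (at 0)"
      by (rule has_vector_derivative_transform_within_open[OF _ oT T0]) (simp add: assms(3))
  qed
  then show ?thesis unfolding pd_def vector_derivative_def by simp
qed

lemma axis_nth_kd: "axis l (1::real) $ i = kd l i"
  by (simp add: axis_def kd_def)

lemma inner_axis_1: "(z::real^'n) \<bullet> axis l 1 = z $ l"
  by (simp add: inner_axis)

lemma pd_metric_entry:
  fixes z :: "real^'n::finite"
  assumes "(A has_real_derivative A1) (at (z \<bullet> z))" "(B has_real_derivative B1) (at (z \<bullet> z))"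
  shows "pd l (\<lambda>y. A (y \<bullet> y) * kd i j + B (y \<bullet> y) * (y $ i * y $ j)) z =
     2 * A1 * z$l * kd i j + 2 * B1 * z$l * (z$i * z$j) + B (z \<bullet> z) * (kd l i * z$j + kd l j * z$i)"
proof -
  have "((\<lambda>y. A (y \<bullet> y) * kd i j + B (y \<bullet> y) * (y $ i * y $ j)) has_derivative
     (\<lambda>h. A1 * (h \<bullet> z + z \<bullet> h) * kd i j + (B1 * (h \<bullet> z + z \<bullet> h) * (z $ i * z $ j) + B (z \<bullet> z) * (h$i * z$j + z$i * h$j)))) (at z)"
    apply (rule derivative_eq_intros refl | rule DERIV_compose_FDERIV[where g="\<lambda>y. y \<bullet> y" and x=z, OF assms(1)] DERIV_compose_FDERIV[where g="\<lambda>y. y \<bullet> y" and x=z, OF assms(2)])+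
    by (auto simp: algebra_simps)
  from pd_has_derivative[OF this, of l] show ?thesis
    by (simp add: axis_nth_kd inner_axis_1 inner_commute algebra_simps)
qed


lemma kd_sym: "kd i j = kd j i" by (simp add: kd_def)
lemma kd_same[simp]: "kd i i = 1" by (simp add: kd_def)

lemma ks1: "(\<Sum>m\<in>UNIV. kd (i::'n::finite) m * f m) = f i"
  by (simp add: kd_def if_distrib[where f="\<lambda>x. x * _"] cong del: if_weak_cong)
lemma ks2: "(\<Sum>m\<in>UNIV. f m * kd m (i::'n::finite)) = f i"
  by (simp add: kd_def if_distrib[where f="\<lambda>x. _ * x"] cong del: if_weak_cong)
lemma zz: "(\<Sum>m\<in>UNIV. (z::real^'n::finite) $ m * z $ m) = z \<bullet> z"
  by (simp add: inner_vec_def)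

definition w :: "real \<Rightarrow> real" where "w r = 1 / (1 - r)"

lemma w_mult: "r < 1 \<Longrightarrow> w r * (1 - r) = 1" by (simp add: w_def)

definition Gs :: "(real \<Rightarrow> real) \<Rightarrow> real^'n::finite \<Rightarrow> real^'n^'n" where
  "Gs A z = (\<chi> i j. A (z \<bullet> z) * kd i j + A (z \<bullet> z) * w (z \<bullet> z) * (z $ i * z $ j))"

definition Gi :: "(real \<Rightarrow> real) \<Rightarrow> real^'n::finite \<Rightarrow> real^'n^'n" where
  "Gi A z = (\<chi> i j. (kd i j - z $ i * z $ j) / A (z \<bullet> z))"

lemma matrix_inv_eq:
  fixes M N :: "real^'n::finite^'n"
  assumes "M ** N = mat 1" "N ** M = mat 1"
  shows "matrix_inv M = N"
proof -
  have "\<exists>N'. M ** N' = mat 1 \<and> N' ** M = mat 1" using assms by blast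
  then have h: "M ** matrix_inv M = mat 1 \<and> matrix_inv M ** M = mat 1"
    unfolding matrix_inv_def by (rule someI_ex)
  have "matrix_inv M = matrix_inv M ** (M ** N)" using assms(1) by simp
  also have "\<dots> = (matrix_inv M ** M) ** N" by (simp add: matrix_mul_assoc)
  also have "\<dots> = N" using h by simp
  finally show ?thesis .
qed

lemma mat1_kd: "(mat 1 :: real^'n::finite^'n) $ i $ j = kd i j"
  by (simp add: mat_def kd_def)

lemma Gs_inv:
  fixes z :: "real^'n::finite"
  assumes "z \<bullet> z < 1" "A (z \<bullet> z) > 0"
  shows "matrix_inv (Gs A z) = Gi A z"
proof (rule matrix_inv_eq)
  let ?r = "z \<bullet> z" let ?A = "A (z \<bullet> z)"
  have a: "?A \<noteq> 0" using assms by simp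
  have e1: "(\<Sum>k\<in>UNIV. (?A * kd i k + ?A * w ?r * (z $ i * z $ k)) * (kd k j - z $ k * z $ j) / ?A) = kd i j" for i j
  proof -
    have "(\<Sum>k\<in>UNIV. (?A * kd i k + ?A * w ?r * (z $ i * z $ k)) * (kd k j - z $ k * z $ j) / ?A)
       = (\<Sum>k\<in>UNIV. kd i k * (kd k j - z $ k * z $ j) + (z $ i * w ?r) * (z $ k * kd k j)
             - (z $ i * z $ j * w ?r) * (z $ k * z $ k))"
      using a by (intro sum.cong refl) (simp add: field_simps)
    also have "\<dots> = kd i j - z $ i * z $ j + (z $ i * w ?r) * z $ j - (z $ i * z $ j * w ?r) * ?r"
      by (simp add: sum.distrib sum_subtractf sum_distrib_left[symmetric] ks1 ks2 zz)
    also have "\<dots> = kd i j" using w_mult[OF assms(1)] by algebra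
    finally show ?thesis .
  qed
  show "Gs A z ** Gi A z = mat 1"
    by (simp add: vec_eq_iff matrix_matrix_mult_def mat1_kd Gs_def Gi_def e1)
  have e2: "(\<Sum>k\<in>UNIV. (kd i k - z $ i * z $ k) * (?A * kd k j + ?A * w ?r * (z $ k * z $ j)) / ?A) = kd i j" for i j
  proof -
    have "(\<Sum>k\<in>UNIV. (kd i k - z $ i * z $ k) * (?A * kd k j + ?A * w ?r * (z $ k * z $ j)) / ?A)
       = (\<Sum>k\<in>UNIV. kd i k * (kd k j + z $ k * z $ j * w ?r) - (z $ i) * (z $ k * kd k j)
             - (z $ i * z $ j * w ?r) * (z $ k * z $ k))"
      using a by (intro sum.cong refl) (simp add: field_simps)
    also have "\<dots> = kd i j + z $ i * z $ j * w ?r - z $ i * z $ j - (z $ i * z $ j * w ?r) * ?r"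
      by (simp add: sum.distrib sum_subtractf sum_distrib_left[symmetric] ks1 ks2 zz)
    also have "\<dots> = kd i j" using w_mult[OF assms(1)] by algebra
    finally show ?thesis .
  qed
  show "Gi A z ** Gs A z = mat 1"
    by (simp add: vec_eq_iff matrix_matrix_mult_def mat1_kd Gs_def Gi_def e2)
qed


lemma ks3: "(\<Sum>m\<in>UNIV. f m * kd (i::'n::finite) m) = f i"
  by (subst kd_sym) (rule ks2)
lemma ks4: "(\<Sum>m\<in>UNIV. kd m (i::'n::finite) * f m) = f i"
  by (subst kd_sym) (rule ks1)

lemma w_deriv: "r < 1 \<Longrightarrow> (w has_real_derivative (w r)^2) (at r)"
  unfolding w_def
  by (auto intro!: derivative_eq_intros simp: power2_eq_square field_simps)

definition Gam :: "(real \<Rightarrow> real) \<Rightarrow> real^'n::finite \<Rightarrow> 'n \<Rightarrow> 'n \<Rightarrow> 'n \<Rightarrow> real" where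
  "Gam a z k i j = a (z \<bullet> z) * (z$i * kd j k + z$j * kd i k) + (1 - a (z \<bullet> z) * (1 - z \<bullet> z)) * kd i j * z$k
     + (w (z \<bullet> z) - a (z \<bullet> z)) * (z$i * z$j) * z$k"

locale radmet =
  fixes Om :: "(real^'n::finite) set" and G :: "real^'n \<Rightarrow> real^'n^'n" and A A1 :: "real \<Rightarrow> real"
  assumes O_open: "open Om" and O_ball: "\<And>z. z \<in> Om \<Longrightarrow> z \<bullet> z < 1"
    and G_eq: "\<And>z. z \<in> Om \<Longrightarrow> G z = Gs A z"
    and A_pos: "\<And>z. z \<in> Om \<Longrightarrow> A (z \<bullet> z) > 0"
    and A_der: "\<And>z. z \<in> Om \<Longrightarrow> (A has_real_derivative A1 (z \<bullet> z)) (at (z \<bullet> z))"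
begin

lemma dG:
  assumes z: "z \<in> Om"
  shows "pd m (\<lambda>y. G y $ i $ j) z = 2 * A1 (z \<bullet> z) * z$m * kd i j
     + 2 * (A1 (z \<bullet> z) * w (z \<bullet> z) + A (z \<bullet> z) * (w (z \<bullet> z))^2) * z$m * (z$i * z$j)
     + A (z \<bullet> z) * w (z \<bullet> z) * (kd m i * z$j + kd m j * z$i)"
proof -
  have "pd m (\<lambda>y. G y $ i $ j) z = pd m (\<lambda>y. A (y \<bullet> y) * kd i j + A (y \<bullet> y) * w (y \<bullet> y) * (y $ i * y $ j)) z"
    by (rule pd_local[OF O_open z]) (simp add: G_eq Gs_def)
  also have "\<dots> = 2 * A1 (z \<bullet> z) * z$m * kd i j
     + 2 * (A1 (z \<bullet> z) * w (z \<bullet> z) + A (z \<bullet> z) * (w (z \<bullet> z))^2) * z$m * (z$i * z$j)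
     + A (z \<bullet> z) * w (z \<bullet> z) * (kd m i * z$j + kd m j * z$i)"
    by (rule pd_metric_entry[where B="\<lambda>r. A r * w r"])
       (auto intro!: derivative_eq_intros A_der[OF z] w_deriv O_ball[OF z])
  finally show ?thesis .
qed

lemma christoffel_eq:
  assumes z: "z \<in> Om"
  shows "christoffel G k i j z = Gam (\<lambda>r. A1 r / A r) z k i j"
proof -
  let ?r = "z \<bullet> z" let ?A = "A ?r" let ?a = "A1 ?r / A ?r" let ?w = "w ?r"
  have Ap: "?A \<noteq> 0" using A_pos[OF z] by simp
  have wr: "?w * (1 - ?r) = 1" using w_mult O_ball[OF z] by blast
  define X where "X l = ?a * (z$i * kd j l + z$j * kd i l) + (?w - ?a) * kd i j * z$l + (?a * ?w + ?w^2) * (z$i * z$j) * z$l" for l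
  have "christoffel G k i j z = 1/2 * (\<Sum>l\<in>UNIV. (kd k l - z$k * z$l) / ?A *
      (pd i (\<lambda>y. G y $ j $ l) z + pd j (\<lambda>y. G y $ i $ l) z - pd l (\<lambda>y. G y $ i $ j) z))"
    unfolding christoffel_def G_eq[OF z] Gs_inv[of z A, OF O_ball[OF z] A_pos[OF z]] by (simp add: Gi_def)
  also have "\<dots> = 1/2 * (\<Sum>l\<in>UNIV. 2 * (kd k l * X l) - 2 * z$k * (z$l * X l))"
  proof (intro arg_cong[where f="\<lambda>x. 1/2 * x"] sum.cong refl)
    fix l
    have "pd i (\<lambda>y. G y $ j $ l) z + pd j (\<lambda>y. G y $ i $ l) z - pd l (\<lambda>y. G y $ i $ j) z = 2 * ?A * X l"
      unfolding dG[OF z] X_def kd_sym[of j i] kd_sym[of l i] kd_sym[of l j] using Ap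
      by (simp add: field_simps)
    then show "(kd k l - z$k * z$l) / ?A *
      (pd i (\<lambda>y. G y $ j $ l) z + pd j (\<lambda>y. G y $ i $ l) z - pd l (\<lambda>y. G y $ i $ j) z) =
      2 * (kd k l * X l) - 2 * z$k * (z$l * X l)"
      using Ap by (simp add: field_simps)
  qed
  also have "\<dots> = X k - z$k * (\<Sum>l\<in>UNIV. z$l * X l)"
    by (simp add: sum_subtractf sum_distrib_left[symmetric] ks1)
  also have "(\<Sum>l\<in>UNIV. z$l * X l) = (\<Sum>l\<in>UNIV. ?a * z$i * (z$l * kd j l) + ?a * z$j * (z$l * kd i l)
      + (?w - ?a) * kd i j * (z$l * z$l) + (?a * ?w + ?w^2) * (z$i * z$j) * (z$l * z$l))"
    by (rule sum.cong) (simp_all add: X_def algebra_simps)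
  also have "\<dots> = ?a * z$i * z$j + ?a * z$j * z$i + (?w - ?a) * kd i j * ?r + (?a * ?w + ?w^2) * (z$i * z$j) * ?r"
    by (simp only: sum.distrib sum_distrib_left[symmetric] ks3 zz)
  finally show ?thesis
    unfolding Gam_def X_def using wr by algebra
qed

end


lemma pd_Gam:
  fixes y :: "real^'n::finite"
  assumes "y \<bullet> y < 1" "(a has_real_derivative a1) (at (y \<bullet> y))"
  shows "pd m (\<lambda>z. Gam a z k i j) y =
     2 * a1 * y$m * (y$i * kd j k + y$j * kd i k) + a (y \<bullet> y) * (kd m i * kd j k + kd m j * kd i k)
   + (2 * a (y \<bullet> y) - 2 * a1 * (1 - y \<bullet> y)) * y$m * kd i j * y$k + (1 - a (y \<bullet> y) * (1 - y \<bullet> y)) * kd i j * kd m k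
   + 2 * ((w (y \<bullet> y))^2 - a1) * y$m * (y$i * y$j) * y$k
   + (w (y \<bullet> y) - a (y \<bullet> y)) * (kd m i * y$j * y$k + y$i * kd m j * y$k + y$i * y$j * kd m k)"
proof -
  have "((\<lambda>z. Gam a z k i j) has_derivative (\<lambda>h.
      a1 * (h \<bullet> y + y \<bullet> h) * (y$i * kd j k + y$j * kd i k) + a (y \<bullet> y) * (h$i * kd j k + h$j * kd i k)
    + (- (a1 * (h \<bullet> y + y \<bullet> h) * (1 - y \<bullet> y) - a (y \<bullet> y) * (h \<bullet> y + y \<bullet> h))) * kd i j * y$k
    + (1 - a (y \<bullet> y) * (1 - y \<bullet> y)) * kd i j * h$k
    + ((h \<bullet> y + y \<bullet> h) * (w (y \<bullet> y))^2 - a1 * (h \<bullet> y + y \<bullet> h)) * (y$i * y$j) * y$k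
    + (w (y \<bullet> y) - a (y \<bullet> y)) * ((h$i * y$j + y$i * h$j) * y$k + (y$i * y$j) * h$k))) (at y)"
    unfolding Gam_def
    apply (rule derivative_eq_intros refl
       | rule DERIV_compose_FDERIV[where g="\<lambda>y. y \<bullet> y" and x=y, OF assms(2)]
              DERIV_compose_FDERIV[where g="\<lambda>y. y \<bullet> y" and x=y, OF w_deriv[OF assms(1)]])+
    by (simp add: algebra_simps)
  from pd_has_derivative[OF this, of m] show ?thesis
    by (simp add: axis_nth_kd inner_axis_1 inner_commute algebra_simps)
qed


lemma Lprod:
  fixes z :: "real^'n::finite"
  shows "(\<Sum>l\<in>UNIV. (p * kd l k + q * z$l + s * kd j l) * (t * kd k l + u * z$l + x * kd i l))
   = p*t + p*u*z$k + p*x*kd k i + q*t*z$k + q*u*(z \<bullet> z) + q*x*z$i + s*t*kd j k + s*u*z$j + s*x*kd j i"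
proof -
  have "(\<Sum>l\<in>UNIV. (p * kd l k + q * z$l + s * kd j l) * (t * kd k l + u * z$l + x * kd i l))
    = (\<Sum>l\<in>UNIV. (p*t) * (kd l k * kd k l) + (p*u) * (kd l k * z$l) + (p*x) * (kd l k * kd i l)
       + (q*t) * (z$l * kd k l) + (q*u) * (z$l * z$l) + (q*x) * (z$l * kd i l)
       + (s*t) * (kd j l * kd k l) + (s*u) * (kd j l * z$l) + (s*x) * (kd j l * kd i l))"
    by (rule sum.cong) (simp_all add: algebra_simps)
  also have "\<dots> = p*t + p*u*z$k + p*x*kd k i + q*t*z$k + q*u*(z \<bullet> z) + q*x*z$i + s*t*kd j k + s*u*z$j + s*x*kd j i"
    by (simp only: sum.distrib sum_distrib_left[symmetric] ks1 ks2 ks3 ks4 zz kd_same mult_1_right; simp add: kd_sym)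
  finally show ?thesis .
qed


context
  fixes y :: "real^'n::finite" and a :: "real \<Rightarrow> real" and a1 :: real
  assumes yb: "y \<bullet> y < 1" and ad: "(a has_real_derivative a1) (at (y \<bullet> y))"
begin

lemma sumT1: "(\<Sum>k\<in>UNIV. pd k (\<lambda>z. Gam a z k i j) y) =
   4 * a1 * (y$i * y$j) + 2 * a (y \<bullet> y) * kd i j + (2 * a (y \<bullet> y) - 2 * a1 * (1 - y \<bullet> y)) * (y \<bullet> y) * kd i j
   + real CARD('n) * (1 - a (y \<bullet> y) * (1 - y \<bullet> y)) * kd i j + 2 * ((w (y \<bullet> y))^2 - a1) * (y \<bullet> y) * (y$i * y$j)
   + (real CARD('n) + 2) * (w (y \<bullet> y) - a (y \<bullet> y)) * (y$i * y$j)"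
proof -
  let ?r = "y \<bullet> y" let ?a = "a ?r" let ?w = "w ?r" let ?b = "1 - a ?r * (1 - ?r)" let ?c = "?w - ?a"
  have "(\<Sum>k\<in>UNIV. pd k (\<lambda>z. Gam a z k i j) y) = (\<Sum>k\<in>UNIV.
      (2*a1*y$i) * (y$k * kd j k) + (2*a1*y$j) * (y$k * kd i k) + ?a * (kd k i * kd j k) + ?a * (kd k j * kd i k)
      + ((2 * ?a - 2 * a1 * (1 - ?r)) * kd i j) * (y$k * y$k) + ?b * kd i j
      + (2 * (?w^2 - a1) * (y$i * y$j)) * (y$k * y$k) + (?c * y$j) * (kd k i * y$k) + (?c * y$i) * (kd k j * y$k)
      + ?c * (y$i * y$j))"
    by (rule sum.cong) (simp_all add: pd_Gam[OF yb ad] algebra_simps)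
  also have "\<dots> = (2*a1*y$i) * y$j + (2*a1*y$j) * y$i + ?a * kd j i + ?a * kd i j
      + ((2 * ?a - 2 * a1 * (1 - ?r)) * kd i j) * ?r + real CARD('n) * (?b * kd i j)
      + (2 * (?w^2 - a1) * (y$i * y$j)) * ?r + (?c * y$j) * y$i + (?c * y$i) * y$j
      + real CARD('n) * (?c * (y$i * y$j))"
    by (simp only: sum.distrib sum_distrib_left[symmetric] ks1 ks2 ks3 ks4 zz sum_constant; simp add: algebra_simps)
  finally show ?thesis by (simp add: kd_sym[of j i] algebra_simps)
qed

lemma sumT2: "(\<Sum>k\<in>UNIV. pd j (\<lambda>z. Gam a z k i k) y) =
   2 * a1 * real CARD('n) * (y$i * y$j) + 2 * a1 * (y$i * y$j) + a (y \<bullet> y) * real CARD('n) * kd i j + a (y \<bullet> y) * kd i j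
   + (2 * a (y \<bullet> y) - 2 * a1 * (1 - y \<bullet> y)) * (y$i * y$j) + (1 - a (y \<bullet> y) * (1 - y \<bullet> y)) * kd i j
   + 2 * ((w (y \<bullet> y))^2 - a1) * (y \<bullet> y) * (y$i * y$j)
   + (w (y \<bullet> y) - a (y \<bullet> y)) * (y \<bullet> y) * kd i j + 2 * (w (y \<bullet> y) - a (y \<bullet> y)) * (y$i * y$j)"
proof -
  let ?r = "y \<bullet> y" let ?a = "a ?r" let ?w = "w ?r" let ?b = "1 - a ?r * (1 - ?r)" let ?c = "?w - ?a"
  have "(\<Sum>k\<in>UNIV. pd j (\<lambda>z. Gam a z k i k) y) = (\<Sum>k\<in>UNIV.
      2*a1*y$j*y$i + (2*a1*y$j) * (y$k * kd i k) + ?a * kd j i + ?a * (kd j k * kd i k)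
      + ((2 * ?a - 2 * a1 * (1 - ?r)) * y$j) * (kd i k * y$k) + ?b * (kd i k * kd j k)
      + (2 * (?w^2 - a1) * (y$j * y$i)) * (y$k * y$k) + (?c * kd j i) * (y$k * y$k)
      + (?c * y$i) * (kd j k * y$k) + (?c * y$i) * (y$k * kd j k))"
    by (rule sum.cong) (simp_all add: pd_Gam[OF yb ad] algebra_simps)
  also have "\<dots> = real CARD('n) * (2*a1*y$j*y$i) + (2*a1*y$j) * y$i + real CARD('n) * (?a * kd j i) + ?a * kd i j
      + ((2 * ?a - 2 * a1 * (1 - ?r)) * y$j) * y$i + ?b * kd j i
      + (2 * (?w^2 - a1) * (y$j * y$i)) * ?r + (?c * kd j i) * ?r
      + (?c * y$i) * y$j + (?c * y$i) * y$j"
    by (simp only: sum.distrib sum_distrib_left[symmetric] ks1 ks2 ks3 ks4 zz sum_constant; simp add: algebra_simps)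
  finally show ?thesis by (simp add: kd_sym[of j i] algebra_simps)
qed

lemma sumT3: "(\<Sum>k\<in>UNIV. \<Sum>l\<in>UNIV. Gam a y k k l * Gam a y l i j) =
   ((real CARD('n) + 1) * a (y \<bullet> y) + (1 - a (y \<bullet> y) * (1 - y \<bullet> y)) + (w (y \<bullet> y) - a (y \<bullet> y)) * (y \<bullet> y)) *
   (2 * a (y \<bullet> y) * (y$i * y$j) + (1 - a (y \<bullet> y) * (1 - y \<bullet> y)) * (y \<bullet> y) * kd i j
    + (w (y \<bullet> y) - a (y \<bullet> y)) * (y \<bullet> y) * (y$i * y$j))"
proof -
  let ?r = "y \<bullet> y" let ?a = "a ?r" let ?w = "w ?r" let ?b = "1 - a ?r * (1 - ?r)" let ?c = "?w - ?a"
  let ?V = "(real CARD('n) + 1) * ?a + ?b + ?c * ?r"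
  have V: "(\<Sum>k\<in>UNIV. Gam a y k k l) = ?V * y$l" for l
  proof -
    have "(\<Sum>k\<in>UNIV. Gam a y k k l) = (\<Sum>k\<in>UNIV. ?a * (y$k * kd l k) + ?a * y$l + ?b * (kd k l * y$k)
        + (?c * y$l) * (y$k * y$k))"
      by (rule sum.cong) (simp_all add: Gam_def algebra_simps)
    also have "\<dots> = ?a * y$l + real CARD('n) * (?a * y$l) + ?b * y$l + (?c * y$l) * ?r"
      by (simp only: sum.distrib sum_distrib_left[symmetric] ks1 ks2 ks3 ks4 zz sum_constant; simp add: algebra_simps)
    finally show ?thesis by (simp add: algebra_simps)
  qed
  have "(\<Sum>k\<in>UNIV. \<Sum>l\<in>UNIV. Gam a y k k l * Gam a y l i j) = (\<Sum>l\<in>UNIV. \<Sum>k\<in>UNIV. Gam a y k k l * Gam a y l i j)"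
    by (rule sum.swap)
  also have "\<dots> = (\<Sum>l\<in>UNIV. ?V * y$l * Gam a y l i j)"
    by (simp add: sum_distrib_right[symmetric] V)
  also have "\<dots> = (\<Sum>l\<in>UNIV. (?V * ?a * y$i) * (y$l * kd j l) + (?V * ?a * y$j) * (y$l * kd i l)
      + (?V * ?b * kd i j) * (y$l * y$l) + (?V * ?c * (y$i * y$j)) * (y$l * y$l))"
    by (rule sum.cong) (simp_all add: Gam_def algebra_simps)
  also have "\<dots> = (?V * ?a * y$i) * y$j + (?V * ?a * y$j) * y$i + (?V * ?b * kd i j) * ?r + (?V * ?c * (y$i * y$j)) * ?r"
    by (simp only: sum.distrib sum_distrib_left[symmetric] ks1 ks2 ks3 ks4 zz sum_constant; simp add: algebra_simps)
  finally show ?thesis by (simp add: algebra_simps)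
qed

lemma sumT4: "(\<Sum>k\<in>UNIV. \<Sum>l\<in>UNIV. Gam a y k j l * Gam a y l i k) =
   2 * (y \<bullet> y) * a (y \<bullet> y) * (1 - a (y \<bullet> y) * (1 - y \<bullet> y)) * kd i j
   + ((real CARD('n) + 3) * (a (y \<bullet> y))^2 + 2 * a (y \<bullet> y) * (1 - a (y \<bullet> y) * (1 - y \<bullet> y))
      + 4 * a (y \<bullet> y) * (w (y \<bullet> y) - a (y \<bullet> y)) * (y \<bullet> y)
      + 2 * (1 - a (y \<bullet> y) * (1 - y \<bullet> y)) * (w (y \<bullet> y) - a (y \<bullet> y)) * (y \<bullet> y)
      + (y \<bullet> y)^2 * (w (y \<bullet> y) - a (y \<bullet> y))^2 + (1 - a (y \<bullet> y) * (1 - y \<bullet> y))^2) * (y$i * y$j)"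
proof -
  let ?r = "y \<bullet> y" let ?a = "a ?r" let ?w = "w ?r" let ?b = "1 - a ?r * (1 - ?r)" let ?c = "?w - ?a"
  have inner: "(\<Sum>l\<in>UNIV. Gam a y k j l * Gam a y l i k) =
      (?a*y$j)*(?a*y$i) + (?a*y$j)*(?b*kd i k + ?c*y$i*y$k)*y$k + (?a*y$j)*(?a*y$k)*kd k i
      + (?a*kd j k + ?c*y$j*y$k)*(?a*y$i)*y$k + (?a*kd j k + ?c*y$j*y$k)*(?b*kd i k + ?c*y$i*y$k)*?r
      + (?a*kd j k + ?c*y$j*y$k)*(?a*y$k)*y$i + (?b*y$k)*(?a*y$i)*kd j k + (?b*y$k)*(?b*kd i k + ?c*y$i*y$k)*y$j
      + (?b*y$k)*(?a*y$k)*kd j i" for k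
  proof -
    have "(\<Sum>l\<in>UNIV. Gam a y k j l * Gam a y l i k) = (\<Sum>l\<in>UNIV.
       ((?a*y$j) * kd l k + (?a*kd j k + ?c*y$j*y$k) * y$l + (?b*y$k) * kd j l) *
       ((?a*y$i) * kd k l + (?b*kd i k + ?c*y$i*y$k) * y$l + (?a*y$k) * kd i l))"
      by (rule sum.cong) (simp_all add: Gam_def algebra_simps)
    then show ?thesis by (simp only: Lprod)
  qed
  have "(\<Sum>k\<in>UNIV. \<Sum>l\<in>UNIV. Gam a y k j l * Gam a y l i k) = (\<Sum>k\<in>UNIV.
      (?a*?a*y$i*y$j) + (?a*?b*y$j) * (kd i k * y$k) + (?a*?c*y$j*y$i) * (y$k*y$k) + (?a*?a*y$j) * (y$k * kd k i)
      + (?a*?a*y$i) * (kd j k * y$k) + (?a*?c*y$j*y$i) * (y$k*y$k)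
      + (?r*?a*?b) * (kd j k * kd i k) + (?r*?a*?c*y$i) * (kd j k * y$k) + (?r*?c*?b*y$j) * (y$k * kd i k)
      + (?r*?c*?c*y$i*y$j) * (y$k*y$k)
      + (?a*?a*y$i) * (kd j k * y$k) + (?a*?c*y$i*y$j) * (y$k*y$k)
      + (?b*?a*y$i) * (y$k * kd j k) + (?b*?b*y$j) * (y$k * kd i k) + (?b*?c*y$i*y$j) * (y$k*y$k)
      + (?b*?a*kd j i) * (y$k*y$k))"
    by (rule sum.cong) (simp_all add: inner algebra_simps)
  also have "\<dots> = real CARD('n) * (?a*?a*y$i*y$j) + (?a*?b*y$j) * y$i + (?a*?c*y$j*y$i) * ?r + (?a*?a*y$j) * y$i
      + (?a*?a*y$i) * y$j + (?a*?c*y$j*y$i) * ?r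
      + (?r*?a*?b) * kd i j + (?r*?a*?c*y$i) * y$j + (?r*?c*?b*y$j) * y$i
      + (?r*?c*?c*y$i*y$j) * ?r
      + (?a*?a*y$i) * y$j + (?a*?c*y$i*y$j) * ?r
      + (?b*?a*y$i) * y$j + (?b*?b*y$j) * y$i + (?b*?c*y$i*y$j) * ?r
      + (?b*?a*kd j i) * ?r"
    by (simp only: sum.distrib sum_distrib_left[symmetric] ks1 ks2 ks3 ks4 zz sum_constant; simp add: algebra_simps)
  finally show ?thesis unfolding kd_sym[of j i] by (simp add: algebra_simps power2_eq_square)
qed

end


lemma phi_ident:
  fixes n r a a1 w :: real
  assumes wr: "w * (1 - r) = 1"
  shows "n * ((2 * a + (2 * a - 2 * a1 * (1-r)) * r + n * (1 - a*(1-r))) - (a * n + a + (1 - a*(1-r)) + (w-a) * r)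
     + ((n + 1) * a + (1 - a*(1-r)) + (w-a) * r) * (1 - a*(1-r)) * r - 2 * r * a * (1 - a*(1-r)))
   + ((4 * a1 + 2 * (w^2 - a1) * r + (n + 2) * (w-a))
     - (2 * a1 * n + 2 * a1 + (2 * a - 2 * a1 * (1-r)) + 2 * (w^2 - a1) * r + 2 * (w-a))
     + ((n + 1) * a + (1 - a*(1-r)) + (w-a) * r) * (2 * a + (w-a) * r)
     - ((n + 3) * a^2 + 2 * a * (1 - a*(1-r)) + 4 * a * (w-a) * r + 2 * (1 - a*(1-r)) * (w-a) * r + r^2 * (w-a)^2 + (1 - a*(1-r))^2)
     - ((2 * a + (2 * a - 2 * a1 * (1-r)) * r + n * (1 - a*(1-r))) - (a * n + a + (1 - a*(1-r)) + (w-a) * r)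
     + ((n + 1) * a + (1 - a*(1-r)) + (w-a) * r) * (1 - a*(1-r)) * r - 2 * r * a * (1 - a*(1-r)))
     - ((4 * a1 + 2 * (w^2 - a1) * r + (n + 2) * (w-a))
     - (2 * a1 * n + 2 * a1 + (2 * a - 2 * a1 * (1-r)) + 2 * (w^2 - a1) * r + 2 * (w-a))
     + ((n + 1) * a + (1 - a*(1-r)) + (w-a) * r) * (2 * a + (w-a) * r)
     - ((n + 3) * a^2 + 2 * a * (1 - a*(1-r)) + 4 * a * (w-a) * r + 2 * (1 - a*(1-r)) * (w-a) * r + r^2 * (w-a)^2 + (1 - a*(1-r))^2)) * r) * r
   = (n - 1) * (n + 2 * r * a - 2 * n * (1-r) * a - 4 * r * (1-r) * a1 - (n - 2) * r * (1-r) * a^2)"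
proof -
  have r1: "r \<noteq> 1" using wr by auto
  have w: "w = 1 / (1 - r)" using wr r1 by (simp add: field_simps)
  define s where "s = 1 - r"
  have s0: "s \<noteq> 0" using r1 by (simp add: s_def)
  have rs: "r = 1 - s" by (simp add: s_def)
  have ws: "w = 1 / s" using w by (simp add: s_def)
  show ?thesis unfolding ws rs using s0 by (simp add: field_simps power2_eq_square; simp add: algebra_simps)
qed


context radmet
begin

lemma scalar_eq:
  assumes y: "y \<in> Om" and ad: "((\<lambda>r. A1 r / A r) has_real_derivative a1) (at (y \<bullet> y))"
  shows "scalar_curvature G y = (real CARD('n) - 1) * (real CARD('n) + 2 * (y \<bullet> y) * (A1 (y \<bullet> y) / A (y \<bullet> y))
     - 2 * real CARD('n) * (1 - y \<bullet> y) * (A1 (y \<bullet> y) / A (y \<bullet> y)) - 4 * (y \<bullet> y) * (1 - y \<bullet> y) * a1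
     - (real CARD('n) - 2) * (y \<bullet> y) * (1 - y \<bullet> y) * (A1 (y \<bullet> y) / A (y \<bullet> y))^2) / A (y \<bullet> y)"
proof -
  define a where "a = (\<lambda>r. A1 r / A r)"
  let ?r = "y \<bullet> y" let ?a = "a ?r" let ?w = "w ?r" let ?b = "1 - a ?r * (1 - ?r)" let ?c = "?w - ?a"
  let ?n = "real CARD('n)" let ?s = "1 - ?r"
  let ?V = "(?n + 1) * ?a + ?b + ?c * ?r"
  have yb: "?r < 1" using O_ball[OF y] .
  have ad': "(a has_real_derivative a1) (at ?r)" using ad unfolding a_def .
  have Ap: "A ?r > 0" using A_pos[OF y] .
  have wr: "?w * ?s = 1" using w_mult[OF yb] .
  define \<alpha> where "\<alpha> = (2 * ?a + (2 * ?a - 2 * a1 * ?s) * ?r + ?n * ?b) - (?a * ?n + ?a + ?b + ?c * ?r)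
     + ?V * ?b * ?r - 2 * ?r * ?a * ?b"
  define \<beta> where "\<beta> = (4 * a1 + 2 * (?w^2 - a1) * ?r + (?n + 2) * ?c)
     - (2 * a1 * ?n + 2 * a1 + (2 * ?a - 2 * a1 * ?s) + 2 * (?w^2 - a1) * ?r + 2 * ?c)
     + ?V * (2 * ?a + ?c * ?r)
     - ((?n + 3) * ?a^2 + 2 * ?a * ?b + 4 * ?a * ?c * ?r + 2 * ?b * ?c * ?r + ?r^2 * ?c^2 + ?b^2)"
  have chr: "christoffel G k i j z = Gam a z k i j" if "z \<in> Om" for k i j z
    using christoffel_eq[OF that] unfolding a_def .
  have ric: "ricci G i j y = \<alpha> * kd i j + \<beta> * (y$i * y$j)" for i j
  proof -
    have "ricci G i j y = (\<Sum>k\<in>UNIV. pd k (\<lambda>z. Gam a z k i j) y - pd j (\<lambda>z. Gam a z k i k) y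
        + (\<Sum>l\<in>UNIV. Gam a y k k l * Gam a y l i j - Gam a y k j l * Gam a y l i k))"
      unfolding ricci_def
    proof (rule sum.cong[OF refl])
      fix k
      have e1: "pd k (christoffel G k i j) y = pd k (\<lambda>z. Gam a z k i j) y"
        by (rule pd_local[OF O_open y]) (rule chr)
      have e2: "pd j (christoffel G k i k) y = pd j (\<lambda>z. Gam a z k i k) y"
        by (rule pd_local[OF O_open y]) (rule chr)
      show "pd k (christoffel G k i j) y - pd j (christoffel G k i k) y +
         (\<Sum>l\<in>UNIV. christoffel G k k l y * christoffel G l i j y - christoffel G k j l y * christoffel G l i k y) =
         pd k (\<lambda>z. Gam a z k i j) y - pd j (\<lambda>z. Gam a z k i k) y
        + (\<Sum>l\<in>UNIV. Gam a y k k l * Gam a y l i j - Gam a y k j l * Gam a y l i k)"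
        unfolding e1 e2 chr[OF y] ..
    qed
    also have "\<dots> = (\<Sum>k\<in>UNIV. pd k (\<lambda>z. Gam a z k i j) y) - (\<Sum>k\<in>UNIV. pd j (\<lambda>z. Gam a z k i k) y)
        + (\<Sum>k\<in>UNIV. \<Sum>l\<in>UNIV. Gam a y k k l * Gam a y l i j) - (\<Sum>k\<in>UNIV. \<Sum>l\<in>UNIV. Gam a y k j l * Gam a y l i k)"
      by (simp add: sum.distrib sum_subtractf)
    also have "\<dots> = \<alpha> * kd i j + \<beta> * (y$i * y$j)"
      unfolding sumT1[OF yb ad'] sumT2[OF yb ad'] sumT3[OF yb ad'] sumT4[OF yb ad'] \<alpha>_def \<beta>_def
      by (simp add: algebra_simps)
    finally show ?thesis .
  qed
  have "scalar_curvature G y = (\<Sum>i\<in>UNIV. \<Sum>j\<in>UNIV. (kd i j - y$i * y$j) / A ?r * (\<alpha> * kd i j + \<beta> * (y$i * y$j)))"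
    unfolding scalar_curvature_def G_eq[OF y] Gs_inv[of y A, OF yb Ap] ric by (simp add: Gi_def)
  also have "\<dots> = (\<Sum>i\<in>UNIV. \<alpha> / A ?r + ((\<beta> - \<alpha> - \<beta> * ?r) / A ?r) * (y$i * y$i))"
  proof (rule sum.cong[OF refl])
    fix i
    have "(\<Sum>j\<in>UNIV. (kd i j - y$i * y$j) / A ?r * (\<alpha> * kd i j + \<beta> * (y$i * y$j)))
      = (\<Sum>j\<in>UNIV. (\<alpha> / A ?r) * (kd i j * kd i j) + (\<beta> / A ?r * y$i) * (kd i j * y$j)
          - (\<alpha> / A ?r * y$i) * (y$j * kd i j) - (\<beta> / A ?r * y$i * y$i) * (y$j * y$j))"
      by (rule sum.cong) (simp_all add: algebra_simps diff_divide_distrib)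
    also have "\<dots> = (\<alpha> / A ?r) * 1 + (\<beta> / A ?r * y$i) * y$i - (\<alpha> / A ?r * y$i) * y$i - (\<beta> / A ?r * y$i * y$i) * ?r"
      by (simp only: sum.distrib sum_subtractf sum_distrib_left[symmetric] ks1 ks2 ks3 ks4 zz kd_same)
    also have "\<dots> = \<alpha> / A ?r + ((\<beta> - \<alpha> - \<beta> * ?r) / A ?r) * (y$i * y$i)"
      using Ap by (simp add: field_simps)
    finally show "(\<Sum>j\<in>UNIV. (kd i j - y$i * y$j) / A ?r * (\<alpha> * kd i j + \<beta> * (y$i * y$j))) =
       \<alpha> / A ?r + ((\<beta> - \<alpha> - \<beta> * ?r) / A ?r) * (y$i * y$i)" .
  qed
  also have "\<dots> = ?n * (\<alpha> / A ?r) + ((\<beta> - \<alpha> - \<beta> * ?r) / A ?r) * ?r"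
    by (simp only: sum.distrib sum_distrib_left[symmetric] zz sum_constant)
  also have "\<dots> = (?n * \<alpha> + (\<beta> - \<alpha> - \<beta> * ?r) * ?r) / A ?r"
    using Ap by (simp add: field_simps)
  also have "?n * \<alpha> + (\<beta> - \<alpha> - \<beta> * ?r) * ?r = (?n - 1) * (?n + 2 * ?r * ?a - 2 * ?n * ?s * ?a - 4 * ?r * ?s * a1
     - (?n - 2) * ?r * ?s * ?a^2)"
    unfolding \<alpha>_def \<beta>_def by (rule phi_ident[OF wr])
  finally show ?thesis unfolding a_def .
qed

end


definition UF :: "real \<Rightarrow> real \<Rightarrow> real" where "UF d t = 1 - exp (- 1 / (t - d))"
definition qF :: "real \<Rightarrow> real \<Rightarrow> real" where "qF d t = exp (- 1 / (t - d)) / ((t - d)^2 * UF d t)"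

lemma E_bounds: "(t::real) > d \<Longrightarrow> 0 < exp (- 1 / (t - d)) \<and> exp (- 1 / (t - d)) < 1"
  using divide_neg_pos[of "-1" "t-d"] by simp

lemma UF_pos: "t > d \<Longrightarrow> 0 < UF d t \<and> UF d t < 1"
  using E_bounds[of d t] by (simp add: UF_def)

lemma UF_deriv: "t > d \<Longrightarrow> (UF d has_real_derivative - (exp (- 1 / (t - d)) / (t - d)^2)) (at t)"
  unfolding UF_def
  by (auto intro!: derivative_eq_intros simp: power2_eq_square field_simps)

lemma UFp_deriv: "t > d \<Longrightarrow> ((\<lambda>t. UF d t powr p) has_real_derivative - (p * UF d t powr p * qF d t)) (at t)"
proof -
  assume td: "t > d"
  have u: "0 < UF d t" using UF_pos[OF td] by simp
  have "((\<lambda>t. UF d t powr p) has_real_derivative p * UF d t powr (p - 1) * (- (exp (- 1 / (t - d)) / (t - d)^2))) (at t)"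
    using DERIV_fun_powr[OF UF_deriv[OF td] u, of p] by simp
  moreover have "p * UF d t powr (p - 1) * (- (exp (- 1 / (t - d)) / (t - d)^2)) = - (p * UF d t powr p * qF d t)"
    using u td by (simp add: qF_def powr_diff field_simps)
  ultimately show ?thesis by simp
qed

lemma qF_alg:
  fixes E u x :: real assumes "x \<noteq> 0" "u \<noteq> 0"
  shows "(E / x^2 * (x^2 * u) - E * (2 * x * u + (- (E / x^2)) * x^2)) / (x^2 * u * (x^2 * u))
       = E / (x^2 * u) * (1 / x^2 - 2 / x + E / (x^2 * u))"
  using assms by (simp add: field_simps power2_eq_square)

lemma qF_deriv: "t > d \<Longrightarrow> (qF d has_real_derivative qF d t * (1 / (t - d)^2 - 2 / (t - d) + qF d t)) (at t)"
proof -
  assume td: "t > d"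
  have u: "UF d t \<noteq> 0" using UF_pos[OF td] by simp
  have s: "t - d \<noteq> 0" using td by simp
  have u': "1 - exp (- 1 / (t - d)) \<noteq> 0" using u by (simp add: UF_def)
  show ?thesis
  proof -
    let ?E = "exp (- 1 / (t - d))"
    have e: "((\<lambda>t. exp (- 1 / (t - d))) has_real_derivative ?E / (t - d)^2) (at t)"
      using s by (auto intro!: derivative_eq_intros simp: power2_eq_square field_simps)
    have g: "((\<lambda>t. (t - d)^2 * UF d t) has_real_derivative 2 * (t - d) * UF d t + (- (?E / (t - d)^2)) * (t - d)^2) (at t)"
    proof -
      have p2: "((\<lambda>t. (t - d)^2) has_real_derivative 2 * (t - d)) (at t)"
        by (auto intro!: derivative_eq_intros)
      show ?thesis by (rule DERIV_mult[OF p2 UF_deriv[OF td]])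
    qed
    have gz: "(t - d)^2 * UF d t \<noteq> 0" using u s by simp
    have "(qF d has_real_derivative (?E / (t - d)^2 * ((t - d)^2 * UF d t) - ?E * (2 * (t - d) * UF d t + (- (?E / (t - d)^2)) * (t - d)^2)) / ((t - d)^2 * UF d t * ((t - d)^2 * UF d t))) (at t)"
      unfolding qF_def by (rule DERIV_divide[OF e g gz])
    moreover have "(?E / (t - d)^2 * ((t - d)^2 * UF d t) - ?E * (2 * (t - d) * UF d t + (- (?E / (t - d)^2)) * (t - d)^2)) / ((t - d)^2 * UF d t * ((t - d)^2 * UF d t))
       = qF d t * (1 / (t - d)^2 - 2 / (t - d) + qF d t)"
      unfolding qF_def using qF_alg[OF s u] .
    ultimately show ?thesis by simp
  qed
qed


definition Aof :: "real \<Rightarrow> real \<Rightarrow> real \<Rightarrow> real" where "Aof d p r = UF d (sqrt (1 - r)) powr p"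
definition aof :: "real \<Rightarrow> real \<Rightarrow> real \<Rightarrow> real" where "aof d p r = p / 2 * qF d (sqrt (1 - r)) / sqrt (1 - r)"
definition A1of :: "real \<Rightarrow> real \<Rightarrow> real \<Rightarrow> real" where "A1of d p r = Aof d p r * aof d p r"
definition a1of :: "real \<Rightarrow> real \<Rightarrow> real \<Rightarrow> real" where
  "a1of d p r = - (1 / (2 * sqrt (1 - r))) * aof d p r *
     (1 / (sqrt (1 - r) - d)^2 - 2 / (sqrt (1 - r) - d) + qF d (sqrt (1 - r)) - 1 / sqrt (1 - r))"

lemma sqrt_deriv: "r < 1 \<Longrightarrow> ((\<lambda>r. sqrt (1 - r)) has_real_derivative - (1 / (2 * sqrt (1 - r)))) (at r)"
  by (auto intro!: derivative_eq_intros simp: field_simps)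

context fixes d p r :: real
  assumes d0: "0 < d" and r1: "r < 1" and fd: "d < sqrt (1 - r)"
begin

lemma f_pos: "0 < sqrt (1 - r)" using d0 fd by linarith

lemma Aof_deriv: "(Aof d p has_real_derivative A1of d p r) (at r)"
proof -
  have "((\<lambda>r. UF d (sqrt (1 - r)) powr p) has_real_derivative
      (- (p * UF d (sqrt (1 - r)) powr p * qF d (sqrt (1 - r)))) * (- (1 / (2 * sqrt (1 - r))))) (at r)"
    using DERIV_chain2[OF UFp_deriv[OF fd] sqrt_deriv[OF r1]] .
  moreover have "(- (p * UF d (sqrt (1 - r)) powr p * qF d (sqrt (1 - r)))) * (- (1 / (2 * sqrt (1 - r)))) = A1of d p r"
    unfolding A1of_def Aof_def aof_def using f_pos by (simp add: field_simps)
  ultimately show ?thesis unfolding Aof_def by simp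
qed

lemma aof_deriv: "(aof d p has_real_derivative a1of d p r) (at r)"
proof -
  let ?f = "sqrt (1 - r)"
  have t0: "?f \<noteq> 0" using f_pos by simp
  have h: "((\<lambda>t. p / 2 * qF d t / t) has_real_derivative
      (p / 2 * (qF d ?f * (1 / (?f - d)^2 - 2 / (?f - d) + qF d ?f)) * ?f - p / 2 * qF d ?f * 1) / (?f * ?f)) (at ?f)"
    by (rule DERIV_divide[OF DERIV_cmult[OF qF_deriv[OF fd]] DERIV_ident t0])
  have "(aof d p has_real_derivative
      (p / 2 * (qF d ?f * (1 / (?f - d)^2 - 2 / (?f - d) + qF d ?f)) * ?f - p / 2 * qF d ?f * 1) / (?f * ?f)
       * (- (1 / (2 * ?f)))) (at r)"
    unfolding aof_def using DERIV_chain2[OF h sqrt_deriv[OF r1]] .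
  moreover have "(p / 2 * (qF d ?f * (1 / (?f - d)^2 - 2 / (?f - d) + qF d ?f)) * ?f - p / 2 * qF d ?f * 1) / (?f * ?f)
       * (- (1 / (2 * ?f))) = a1of d p r"
    unfolding a1of_def aof_def using t0 by (simp add: field_simps)
  ultimately show ?thesis by simp
qed

lemma ratio_deriv: "((\<lambda>r. A1of d p r / Aof d p r) has_real_derivative a1of d p r) (at r)"
proof (rule has_field_derivative_transform_within_open[OF aof_deriv])
  let ?S = "{r. r < 1} \<inter> {r. d < sqrt (1 - r)}"
  show "open ?S"
    by (intro open_Int open_Collect_less) (auto intro!: continuous_intros)
  show "r \<in> ?S" using r1 fd by simp
  fix x assume "x \<in> ?S"
  then have "d < sqrt (1 - x)" by simp
  then have "UF d (sqrt (1 - x)) > 0" using UF_pos by blast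
  then have "Aof d p x \<noteq> 0" unfolding Aof_def by simp
  then show "aof d p x = A1of d p x / Aof d p x" unfolding A1of_def by simp
qed

end


lemma round_metric_eq:
  fixes y :: "real^'n::finite"
  assumes yb: "y \<bullet> y < 1"
  shows "round_metric y = (\<chi> i j. kd i j + w (y \<bullet> y) * (y $ i * y $ j))"
proof -
  have sc: "sphere_chart = (\<lambda>y::real^'n. (y, sqrt (1 - y \<bullet> y)))"
    by (auto simp: sphere_chart_def power2_norm_eq_inner)
  have pos: "0 < 1 - y \<bullet> y" using yb by simp
  have "((\<lambda>y::real^'n. (y, sqrt (1 - y \<bullet> y))) has_derivative
      (\<lambda>h. (h, (- (h \<bullet> y + y \<bullet> h)) * (inverse (sqrt (1 - y \<bullet> y)) / 2)))) (at y)"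
    using pos by (auto intro!: derivative_eq_intros ext)
  then have pdc: "pd i sphere_chart y = (axis i 1, - (y $ i) / sqrt (1 - y \<bullet> y))" for i
    unfolding sc using pd_has_derivative by (fastforce simp: inner_axis_1 inner_commute field_simps)
  have "pd i sphere_chart y \<bullet> pd j sphere_chart y = kd i j + w (y \<bullet> y) * (y $ i * y $ j)" for i j
    unfolding pdc using pos
    by (simp add: inner_axis_axis kd_def w_def field_simps power2_eq_square[symmetric])
  then show ?thesis unfolding round_metric_def by simp
qed


lemma div_gt: "0 < (P::real) \<Longrightarrow> 0 < A \<Longrightarrow> A < 1 \<Longrightarrow> P < P / A"
  using mult_strict_left_mono[of A 1 P] by (simp add: less_divide_eq)

lemma final_ineq:
  fixes n d f q A r :: real
  assumes n3: "n \<ge> 3" and d0: "0 < d" and dn: "d < 1 / (4 * n)" and fd: "d < f" and f3: "f < 3 * d"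
    and q0: "q > 0" and A0: "0 < A" and A1: "A < 1" and r1: "r < 1" and fr: "f = sqrt (1 - r)"
  defines "a \<equiv> 4 / (n - 2) / 2 * q / f"
  defines "a1 \<equiv> - (1 / (2 * f)) * a * (1 / (f - d)^2 - 2 / (f - d) + q - 1 / f)"
  shows "(n - 1) * (n + 2 * r * a - 2 * n * (1 - r) * a - 4 * r * (1 - r) * a1
      - (n - 2) * r * (1 - r) * a^2) / A > n * (n - 1)"
proof -
  define s where "s = f - d"
  have s0: "0 < s" using fd by (simp add: s_def)
  have s2: "s < 2 * d" using f3 by (simp add: s_def)
  have f0: "0 < f" using d0 fd by simp
  have ff: "1 - r = f^2" using r1 fr by simp
  have n2: "n - 2 > 0" using n3 by simp
  have a0: "a > 0" unfolding a_def using n2 q0 f0 by simp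
  have Q: "2 * r * a - 2 * n * (1 - r) * a - 4 * r * (1 - r) * a1 - (n - 2) * r * (1 - r) * a^2
      = 2 * a * f * ((r * (1 - 2 * s) - n * f * s^2) / s^2)"
  proof -
    have fd': "f - d = s" by (simp add: s_def)
    have aq: "(n - 2) * a = 2 * q / f" unfolding a_def using n2 f0 by (simp add: field_simps)
    have qa: "q = (n - 2) * a * f / 2" using aq f0 by (simp add: field_simps)
    show ?thesis unfolding a1_def ff fd' qa
      using s0 f0 n2 by (simp add: field_simps power2_eq_square)
  qed
  have d12: "d < 1/12"
  proof -
    have "d * (n * 4) < 1" using dn n3 by (simp add: field_simps)
    moreover have "d * 12 \<le> d * (n * 4)" using d0 n3 by (intro mult_left_mono) auto
    ultimately show ?thesis by linarith
  qed
  have dd: "d * d < 1 / (16 * n^2)"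
  proof -
    have "d * d < (1 / (4 * n)) * (1 / (4 * n))"
      using d0 dn n3 by (intro mult_strict_mono) auto
    then show ?thesis by (simp add: power2_eq_square)
  qed
  have hr: "r > 9 / 10" using ff f3 d12 f0
  proof -
    have "f^2 < (3 * d)^2" using f0 f3 by (intro power_strict_mono) auto
    moreover have "d * d < (1/12) * (1/12)" using d0 d12 by (intro mult_strict_mono) auto
    ultimately show ?thesis using ff by (simp add: power2_eq_square)
  qed
  have h1: "r * (1 - 2 * s) > 1/2"
  proof -
    have "1 - 2 * s > 2/3" using s2 d12 by linarith
    then have "r * (1 - 2 * s) > 9/10 * (2/3)" using hr by (intro mult_strict_mono) auto
    then show ?thesis by simp
  qed
  have h2: "n * f * s^2 < 1/2"
  proof -
    have "f * s^2 < 3 * d * (2 * d)^2"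
      using f0 s0 f3 s2 by (intro mult_strict_mono power_strict_mono) auto
    then have "n * (f * s^2) < n * (12 * (d * d) * d)" using n3 by (simp add: power2_eq_square algebra_simps)
    also have "\<dots> < n * (12 * (1 / (16 * n^2)) * (1/12))"
      using dd d12 d0 n3 by (intro mult_strict_left_mono mult_strict_mono) auto
    also have "\<dots> = 1 / (16 * n)" using n3 by (simp add: power2_eq_square field_simps)
    also have "\<dots> < 1/2" using n3 by (simp add: field_simps)
    finally show ?thesis by (simp add: algebra_simps)
  qed
  have Qp: "2 * a * f * ((r * (1 - 2 * s) - n * f * s^2) / s^2) > 0"
    using a0 f0 s0 h1 h2 by (intro mult_pos_pos divide_pos_pos) auto
  have "n * (n - 1) < (n - 1) * (n + 2 * a * f * ((r * (1 - 2 * s) - n * f * s^2) / s^2))"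
  proof -
    have "(n - 1) * n < (n - 1) * (n + 2 * a * f * ((r * (1 - 2 * s) - n * f * s^2) / s^2))"
      using Qp n3 by (intro mult_strict_left_mono) auto
    then show ?thesis by (simp add: mult.commute)
  qed
  also have "\<dots> < (n - 1) * (n + 2 * a * f * ((r * (1 - 2 * s) - n * f * s^2) / s^2)) / A"
  proof -
    have pos: "(n - 1) * (n + 2 * a * f * ((r * (1 - 2 * s) - n * f * s^2) / s^2)) > 0"
      using Qp n3 by (intro mult_pos_pos) auto
    then show ?thesis using A0 A1 by (rule div_gt)
  qed
  finally have fin: "n * (n - 1) < (n - 1) * (n + 2 * a * f * ((r * (1 - 2 * s) - n * f * s^2) / s^2)) / A" .
  have E: "n + 2 * r * a - 2 * n * (1 - r) * a - 4 * r * (1 - r) * a1 - (n - 2) * r * (1 - r) * a^2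
     = n + 2 * a * f * ((r * (1 - 2 * s) - n * f * s^2) / s^2)" using Q by linarith
  show ?thesis unfolding E by (rule fin)
qed


lemma height_eq: "height (y::real^'n::finite) = sqrt (1 - y \<bullet> y)"
  by (simp add: height_def sphere_chart_def power2_norm_eq_inner)

theorem proposition4p2:
  assumes "CARD('n::finite) \<ge> 3"
  shows "\<exists>\<delta>0>0. \<forall>\<delta>::real. 0 < \<delta> \<and> \<delta> < \<delta>0 \<longrightarrow>
    (\<forall>G :: real^'n \<Rightarrow> real^'n^'n.
       riemannian_metric_on (ball 0 1) G \<and>
       (\<forall>y\<in>ball 0 1. height y \<le> \<delta> \<longrightarrow> G y = round_metric y) \<and>
       (\<forall>y\<in>ball 0 1. \<delta> < height y \<and> height y < 3 * \<delta> \<longrightarrow>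
          G y = (1 - exp (- 1 / (height y - \<delta>))) powr (4 / (real CARD('n) - 2)) *\<^sub>R round_metric y)
       \<longrightarrow> (\<forall>y\<in>ball 0 1. \<delta> < height y \<and> height y < 3 * \<delta> \<longrightarrow>
              scalar_curvature G y > real CARD('n) * (real CARD('n) - 1)))"
proof -
  let ?n = "real CARD('n)"
  let ?p = "4 / (?n - 2)"
  have n3: "?n \<ge> 3" using assms by simp
  have p0: "?p > 0" using n3 by simp
  show ?thesis
  proof (intro exI[of _ "1 / (4 * ?n)"] conjI allI impI ballI)
    show "0 < 1 / (4 * ?n)" using n3 by simp
    fix \<delta> :: real and G :: "real^'n \<Rightarrow> real^'n^'n" and y :: "real^'n"
    assume d: "0 < \<delta> \<and> \<delta> < 1 / (4 * ?n)"
    assume H: "riemannian_metric_on (ball 0 1) G \<and>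
       (\<forall>y\<in>ball 0 1. height y \<le> \<delta> \<longrightarrow> G y = round_metric y) \<and>
       (\<forall>y\<in>ball 0 1. \<delta> < height y \<and> height y < 3 * \<delta> \<longrightarrow>
          G y = (1 - exp (- 1 / (height y - \<delta>))) powr ?p *\<^sub>R round_metric y)"
    assume yb: "y \<in> ball 0 1" and yh: "\<delta> < height y \<and> height y < 3 * \<delta>"
    have d0: "0 < \<delta>" using d by simp
    define Om where "Om = {z \<in> ball (0::real^'n) 1. \<delta> < height z \<and> height z < 3 * \<delta>}"
    have ball_in: "z \<bullet> z < 1" if "z \<in> ball (0::real^'n) 1" for z
    proof -
      have "norm z < 1" using that by simp
      then have "norm z ^ 2 < 1" by (simp add: power_less_one_iff)
      then show ?thesis by (simp add: power2_norm_eq_inner)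
    qed
    interpret R: radmet Om G "Aof \<delta> ?p" "A1of \<delta> ?p"
    proof
      have "Om = ball 0 1 \<inter> {z. \<delta> < height z} \<inter> {z. height z < 3 * \<delta>}" unfolding Om_def by auto
      then show "open Om" unfolding height_eq
        by (simp only:) (intro open_Int open_ball open_Collect_less; auto intro!: continuous_intros)
    next
      fix z assume z: "z \<in> Om"
      then show zb: "z \<bullet> z < 1" using ball_in unfolding Om_def by auto
      have zh: "\<delta> < sqrt (1 - z \<bullet> z)" using z unfolding Om_def height_eq by auto
      have U: "0 < UF \<delta> (sqrt (1 - z \<bullet> z))" using UF_pos[OF zh] by simp
      show "G z = Gs (Aof \<delta> ?p) z"
      proof -
        have "G z = (1 - exp (- 1 / (height z - \<delta>))) powr ?p *\<^sub>R round_metric z"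
          using H z unfolding Om_def by auto
        also have "\<dots> = Gs (Aof \<delta> ?p) z"
          unfolding round_metric_eq[OF zb] Gs_def Aof_def UF_def height_eq
          by (simp add: vec_eq_iff algebra_simps)
        finally show ?thesis .
      qed
      show "Aof \<delta> ?p (z \<bullet> z) > 0" unfolding Aof_def using U by simp
      show "(Aof \<delta> ?p has_real_derivative A1of \<delta> ?p (z \<bullet> z)) (at (z \<bullet> z))"
        by (rule Aof_deriv[OF d0 zb zh])
    qed
    have yO: "y \<in> Om" using yb yh unfolding Om_def by simp
    have r1: "y \<bullet> y < 1" using ball_in yb by simp
    have fh: "\<delta> < sqrt (1 - y \<bullet> y)" using yh unfolding height_eq by simp
    have f3: "sqrt (1 - y \<bullet> y) < 3 * \<delta>" using yh unfolding height_eq by simp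
    have U: "0 < UF \<delta> (sqrt (1 - y \<bullet> y)) \<and> UF \<delta> (sqrt (1 - y \<bullet> y)) < 1" using UF_pos[OF fh] .
    have A0: "0 < Aof \<delta> ?p (y \<bullet> y)" unfolding Aof_def using U by simp
    have A1: "Aof \<delta> ?p (y \<bullet> y) < 1" unfolding Aof_def using U p0 powr01_less_one by blast
    have q0: "qF \<delta> (sqrt (1 - y \<bullet> y)) > 0"
      unfolding qF_def using U fh by (intro divide_pos_pos mult_pos_pos) auto
    have ratio: "A1of \<delta> ?p (y \<bullet> y) / Aof \<delta> ?p (y \<bullet> y) = aof \<delta> ?p (y \<bullet> y)"
      unfolding A1of_def using A0 by simp
    note sc = R.scalar_eq[OF yO ratio_deriv[OF d0 r1 fh]]
    show "scalar_curvature G y > ?n * (?n - 1)"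
      unfolding sc ratio aof_def a1of_def
      by (rule final_ineq[OF n3 d0 _ fh f3 q0 A0 A1 r1 refl]) (use d in simp)
  qed
qed


end
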